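(* Let $U$ be Haar distributed on $\mathbb U(n)$ and $T_{p,q}=\sum_{i\le p,\,j\le q}|U_{ij}|^2$. There is a constant $C$ such that for all $n\ge 2$ and all $1\le p,q\le n$, $$|\kappa_4(T_{p,q})|\le C\,\frac{p^2q^2}{n^4},$$ where $\kappa_4(X)$ denotes the fourth classical cumulant of the random variable $X$. *)

theory Defs
  imports "HOL-Probability.Probability"
begin

text \<open>n x n complex matrices are represented as functions nat => nat => complex,
  indices 0..n-1, entries outside the n x n block equal to 0.\<close>

type_synonym cmatrix = "nat \<Rightarrow> nat \<Rightarrow> complex"

definition mat_mult :: "nat \<Rightarrow> cmatrix \<Rightarrow> cmatrix \<Rightarrow> cmatrix" where
  "mat_mult n A B = (\<lambda>i j. if i < n \<and> j < n then (\<Sum>k<n. A i k * B k j) else 0)"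

definition mat_adj :: "nat \<Rightarrow> cmatrix \<Rightarrow> cmatrix" where
  "mat_adj n A = (\<lambda>i j. if i < n \<and> j < n then cnj (A j i) else 0)"

definition mat_id :: "nat \<Rightarrow> cmatrix" where
  "mat_id n = (\<lambda>i j. if i < n \<and> j < n \<and> i = j then 1 else 0)"

definition unitary_mat :: "nat \<Rightarrow> cmatrix \<Rightarrow> bool" where
  "unitary_mat n U \<longleftrightarrow>
     (\<forall>i j. (n \<le> i \<or> n \<le> j) \<longrightarrow> U i j = 0) \<and>
     mat_mult n U (mat_adj n U) = mat_id n \<and>
     mat_mult n (mat_adj n U) U = mat_id n"

text \<open>Haar (probability) measure on U(n), viewed as a Borel probability measure
  on the space of matrices (product topology), concentrated on U(n) and invariant
  under left multiplication by unitaries (which characterises Haar measure on the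
  compact group U(n)).\<close>
definition haar_unitary :: "nat \<Rightarrow> cmatrix measure \<Rightarrow> bool" where
  "haar_unitary n \<mu> \<longleftrightarrow>
     prob_space \<mu> \<and> sets \<mu> = sets borel \<and>
     (AE U in \<mu>. unitary_mat n U) \<and>
     (\<forall>V. unitary_mat n V \<longrightarrow> distr \<mu> borel (mat_mult n V) = \<mu>)"

definition cumulant4 :: "'a measure \<Rightarrow> ('a \<Rightarrow> real) \<Rightarrow> real" where
  "cumulant4 M X =
     (let m = integral\<^sup>L M X in
       integral\<^sup>L M (\<lambda>x. (X x - m) ^ 4) - 3 * (integral\<^sup>L M (\<lambda>x. (X x - m) ^ 2))\<^sup>2)"

text \<open>T_{p,q}(U) = sum over i <= p, j <= q of |U_ij|^2 (0-based indices).\<close>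
definition T_block :: "nat \<Rightarrow> nat \<Rightarrow> cmatrix \<Rightarrow> real" where
  "T_block p q U = (\<Sum>i<p. \<Sum>j<q. (cmod (U i j))\<^sup>2)"

end

theory Submission
  imports Defs
begin


lemma cont_mat:
  fixes F :: "'a::topological_space \<Rightarrow> cmatrix"
  assumes "\<And>i j. continuous_on UNIV (\<lambda>x. F x i j)"
  shows "continuous_on UNIV F"
  by (intro continuous_on_coordinatewise_then_product assms)

lemma cont_entry: "continuous_on UNIV (\<lambda>U::cmatrix. U i j)"
proof -
  have "continuous_on UNIV ((\<lambda>v::nat\<Rightarrow>complex. v j) \<circ> (\<lambda>U::cmatrix. U i))"
    by (rule continuous_on_compose) (auto intro: continuous_on_subset[OF continuous_on_product_coordinates])
  then show ?thesis by (simp add: o_def)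
qed

lemma meas_entry[measurable]: "(\<lambda>U::cmatrix. U i j) \<in> borel_measurable borel"
  by (rule borel_measurable_continuous_onI[OF cont_entry])

lemma meas_mat:
  fixes F :: "'a::topological_space \<Rightarrow> cmatrix"
  assumes "\<And>i j. continuous_on UNIV (\<lambda>x. F x i j)"
  shows "F \<in> borel_measurable borel"
  by (rule borel_measurable_continuous_onI[OF cont_mat[OF assms]])


lemma cont_ifc: "continuous_on S F \<Longrightarrow> continuous_on S (\<lambda>x. if c then F x else (0::complex))"
  by (cases c) simp_all

lemma cont_sumprod: "continuous_on UNIV (\<lambda>x::cmatrix. \<Sum>k<n. c k * x k j)"
  by (intro continuous_intros cont_entry)

lemma cont_mm: "continuous_on UNIV (mat_mult n V)"
  unfolding mat_mult_def
proof (intro cont_mat)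
  fix i j show "continuous_on UNIV (\<lambda>x. if i < n \<and> j < n then \<Sum>k<n. V i k * x k j else 0)"
    by (intro cont_ifc cont_sumprod)
qed

lemma cont_adj: "continuous_on UNIV (mat_adj n)"
  unfolding mat_adj_def
proof (intro cont_mat)
  fix i j show "continuous_on UNIV (\<lambda>x::cmatrix. if i < n \<and> j < n then cnj (x j i) else 0)"
    by (intro cont_ifc continuous_on_cnj cont_entry)
qed

lemma cont_pair_entry: "continuous_on UNIV (\<lambda>x::cmatrix\<times>cmatrix. fst x i j)" "continuous_on UNIV (\<lambda>x::cmatrix\<times>cmatrix. snd x i j)"
  by (rule continuous_on_compose2[OF cont_entry], auto intro: continuous_intros)+

lemma cont_mm_pair: "continuous_on UNIV (\<lambda>x::cmatrix\<times>cmatrix. mat_mult n (mat_adj n (snd x)) (fst x))"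
  unfolding mat_mult_def mat_adj_def
proof (intro cont_mat)
  fix i j show "continuous_on UNIV (\<lambda>x::cmatrix\<times>cmatrix. if i < n \<and> j < n then \<Sum>k<n. (if i < n \<and> k < n then cnj (snd x k i) else 0) * fst x k j else 0)"
    by (intro cont_ifc continuous_intros cont_pair_entry)
qed


definition sw :: "nat \<Rightarrow> nat \<Rightarrow> nat \<Rightarrow> nat" where
  "sw i k r = (if r = i then k else if r = k then i else r)"

definition rsw :: "nat \<Rightarrow> nat \<Rightarrow> cmatrix \<Rightarrow> cmatrix" where
  "rsw i k U = (\<lambda>r c. U (sw i k r) c)"

definition Pm :: "nat \<Rightarrow> nat \<Rightarrow> nat \<Rightarrow> cmatrix" where
  "Pm n i k = (\<lambda>r c. if r < n \<and> c < n \<and> c = sw i k r then 1 else 0)"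

definition sq2 :: complex where "sq2 = complex_of_real (1 / sqrt 2)"

definition Hm :: "nat \<Rightarrow> cmatrix" where
  "Hm n = (\<lambda>r c. if r < n \<and> c < n then (if r < 2 \<and> c < 2 then (if r = 1 \<and> c = 1 then - sq2 else sq2)
      else if r = c then 1 else 0) else 0)"

lemma sw_sw[simp]: "sw i k (sw i k r) = r" by (simp add: sw_def)
lemma sw_lt: "i < n \<Longrightarrow> k < n \<Longrightarrow> r < n \<Longrightarrow> sw i k r < n" by (simp add: sw_def)
lemma sw_ge: "i < n \<Longrightarrow> k < n \<Longrightarrow> \<not> r < n \<Longrightarrow> sw i k r = r" by (auto simp add: sw_def)

lemma sq2_sq: "sq2 * sq2 = 1/2"
  unfolding sq2_def by (simp flip: of_real_mult)

lemma sq2_sq2: "2 * (sq2 * sq2) = 1" by (simp add: sq2_sq)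

lemma cnj_sq2[simp]: "cnj sq2 = sq2" unfolding sq2_def by simp

lemma unitary_selfadj:
  assumes "\<forall>i j. (n \<le> i \<or> n \<le> j) \<longrightarrow> A i j = 0" "mat_adj n A = A" "mat_mult n A A = mat_id n"
  shows "unitary_mat n A"
  using assms unfolding unitary_mat_def by simp

lemma Pm_unitary:
  assumes "i < n" "k < n" shows "unitary_mat n (Pm n i k)"
proof (rule unitary_selfadj)
  show "\<forall>a b. (n \<le> a \<or> n \<le> b) \<longrightarrow> Pm n i k a b = 0" by (auto simp: Pm_def)
  show "mat_adj n (Pm n i k) = Pm n i k"
    by (auto simp: mat_adj_def Pm_def fun_eq_iff)
  show "mat_mult n (Pm n i k) (Pm n i k) = mat_id n"
  proof (intro ext)
    fix r c
    show "mat_mult n (Pm n i k) (Pm n i k) r c = mat_id n r c"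
    proof (cases "r < n \<and> c < n")
      case True
      have "(\<Sum>j<n. Pm n i k r j * Pm n i k j c) = (\<Sum>j<n. if j = sw i k r then Pm n i k j c else 0)"
        by (rule sum.cong) (auto simp: Pm_def)
      also have "\<dots> = Pm n i k (sw i k r) c" using True sw_lt[OF assms] by (simp add: sum.delta')
      also have "\<dots> = mat_id n r c" using True sw_lt[OF assms] by (auto simp: Pm_def mat_id_def)
      finally show ?thesis using True by (simp add: mat_mult_def)
    qed (auto simp: mat_mult_def mat_id_def)
  qed
qed

lemma sum_lt2: "2 \<le> n \<Longrightarrow> (\<forall>j. 2 \<le> j \<longrightarrow> j < n \<longrightarrow> f j = 0) \<Longrightarrow> (\<Sum>j<n. f j) = f 0 + f (1::nat)"
proof -
  assume a: "2 \<le> n" "\<forall>j. 2 \<le> j \<longrightarrow> j < n \<longrightarrow> f j = 0"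
  have "(\<Sum>j<n. f j) = (\<Sum>j<2. f j)"
    using a by (intro sum.mono_neutral_right) auto
  also have "\<dots> = f 0 + f 1" by (simp add: numeral_2_eq_2)
  finally show ?thesis .
qed

lemma Hm_unitary:
  assumes "2 \<le> n" shows "unitary_mat n (Hm n)"
proof (rule unitary_selfadj)
  show "\<forall>a b. (n \<le> a \<or> n \<le> b) \<longrightarrow> Hm n a b = 0" by (auto simp: Hm_def)
  show "mat_adj n (Hm n) = Hm n"
    by (auto simp: mat_adj_def Hm_def fun_eq_iff)
  show "mat_mult n (Hm n) (Hm n) = mat_id n"
  proof (intro ext)
    fix r c
    show "mat_mult n (Hm n) (Hm n) r c = mat_id n r c"
    proof (cases "r < n \<and> c < n")
      case True
      show ?thesis
      proof (cases "r < 2")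
        case r2: True
        have "(\<Sum>j<n. Hm n r j * Hm n j c) = Hm n r 0 * Hm n 0 c + Hm n r 1 * Hm n 1 c"
          using r2 assms by (intro sum_lt2) (auto simp: Hm_def)
        then show ?thesis using True r2 assms sq2_sq2
          by (cases "c < 2") (auto simp: mat_mult_def mat_id_def Hm_def less_2_cases_iff)
      next
        case r2: False
        have "(\<Sum>j<n. Hm n r j * Hm n j c) = (\<Sum>j<n. if j = r then Hm n j c else 0)"
          using True r2 by (intro sum.cong) (auto simp: Hm_def)
        also have "\<dots> = Hm n r c" using True by (simp add: sum.delta')
        finally show ?thesis using True r2 by (auto simp: mat_mult_def mat_id_def Hm_def)
      qed
    qed (auto simp: mat_mult_def mat_id_def)
  qed
qed


definition zout :: "nat \<Rightarrow> cmatrix \<Rightarrow> bool" where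
  "zout n U \<longleftrightarrow> (\<forall>i j. (n \<le> i \<or> n \<le> j) \<longrightarrow> U i j = 0)"

lemma unitary_zout: "unitary_mat n U \<Longrightarrow> zout n U"
  by (simp add: unitary_mat_def zout_def)

lemma adj_adj: "zout n U \<Longrightarrow> mat_adj n (mat_adj n U) = U"
  by (auto simp: zout_def mat_adj_def fun_eq_iff)

lemma unitary_adj: "unitary_mat n U \<Longrightarrow> unitary_mat n (mat_adj n U)"
  using adj_adj[OF unitary_zout] unfolding unitary_mat_def
  by (auto simp: mat_adj_def)

lemma mm_adj_identity: "mat_mult n (mat_adj n W) U = mat_adj n (mat_mult n (mat_adj n U) W)"
  by (auto simp: mat_mult_def mat_adj_def fun_eq_iff mult.commute intro!: sum.cong)

lemma mm_Pm: "zout n U \<Longrightarrow> i < n \<Longrightarrow> k < n \<Longrightarrow> mat_mult n (Pm n i k) U = rsw i k U"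
proof (intro ext)
  fix r c assume z: "zout n U" and ik: "i < n" "k < n"
  show "mat_mult n (Pm n i k) U r c = rsw i k U r c"
  proof (cases "r < n \<and> c < n")
    case True
    have "(\<Sum>j<n. Pm n i k r j * U j c) = (\<Sum>j<n. if j = sw i k r then U j c else 0)"
      using True by (intro sum.cong) (auto simp: Pm_def)
    also have "\<dots> = U (sw i k r) c" using True sw_lt[OF ik] by (simp add: sum.delta')
    finally show ?thesis using True by (simp add: mat_mult_def rsw_def)
  next
    case False
    then show ?thesis using z sw_ge[OF ik] by (auto simp: mat_mult_def rsw_def zout_def)
  qed
qed

lemma mm_Hm0: "2 \<le> n \<Longrightarrow> mat_mult n (Hm n) U 0 0 = sq2 * (U 0 0 + U 1 0)"
proof -
  assume n: "2 \<le> n"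
  have "(\<Sum>j<n. Hm n 0 j * U j 0) = Hm n 0 0 * U 0 0 + Hm n 0 1 * U 1 0"
    using n by (intro sum_lt2) (auto simp: Hm_def)
  then show ?thesis using n by (simp add: mat_mult_def Hm_def algebra_simps)
qed

lemma mm_Hm1: "2 \<le> n \<Longrightarrow> mat_mult n (Hm n) U 1 0 = sq2 * (U 0 0 - U 1 0)"
proof -
  assume n: "2 \<le> n"
  have "(\<Sum>j<n. Hm n 1 j * U j 0) = Hm n 1 0 * U 0 0 + Hm n 1 1 * U 1 0"
    using n by (intro sum_lt2) (auto simp: Hm_def)
  then show ?thesis using n by (simp add: mat_mult_def Hm_def algebra_simps)
qed

lemma col_sum: "unitary_mat n U \<Longrightarrow> j < n \<Longrightarrow> (\<Sum>i<n. (cmod (U i j))\<^sup>2) = 1"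
proof -
  assume u: "unitary_mat n U" and j: "j < n"
  have "mat_mult n (mat_adj n U) U j j = mat_id n j j" using u by (simp add: unitary_mat_def)
  then have "(\<Sum>i<n. cnj (U i j) * U i j) = 1" using j by (simp add: mat_mult_def mat_adj_def mat_id_def)
  moreover have "(\<Sum>i<n. cnj (U i j) * U i j) = complex_of_real (\<Sum>i<n. (cmod (U i j))\<^sup>2)"
    by (simp add: complex_norm_square mult.commute del: of_real_power)
  ultimately show ?thesis by (metis of_real_eq_1_iff)
qed

lemma ent_le1: "unitary_mat n U \<Longrightarrow> (cmod (U i j))\<^sup>2 \<le> 1"
proof (cases "i < n \<and> j < n")
  case True
  assume u: "unitary_mat n U"
  have "(cmod (U i j))\<^sup>2 \<le> (\<Sum>i<n. (cmod (U i j))\<^sup>2)"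
    using True by (intro member_le_sum) auto
  then show ?thesis using col_sum[OF u] True by simp
next
  case False
  assume u: "unitary_mat n U"
  then show ?thesis using False unitary_zout[OF u] by (auto simp: zout_def)
qed


lemma cont_rsw: "continuous_on UNIV (rsw i k)"
  unfolding rsw_def by (intro cont_mat cont_entry)

locale haar =
  fixes n :: nat and \<mu> :: "cmatrix measure"
  assumes H: "haar_unitary n \<mu>" and n2: "2 \<le> n"
begin

lemma prob: "prob_space \<mu>" using H by (simp add: haar_unitary_def)
lemma sets_eq: "sets \<mu> = sets borel" using H by (simp add: haar_unitary_def)
lemma AEu: "AE U in \<mu>. unitary_mat n U" using H by (simp add: haar_unitary_def)
lemma inv: "unitary_mat n V \<Longrightarrow> distr \<mu> borel (mat_mult n V) = \<mu>" using H by (simp add: haar_unitary_def)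

sublocale prob_space \<mu> by (rule prob)

lemma meas_mu2: "f \<in> measurable borel (N::'a measure) \<Longrightarrow> f \<in> measurable \<mu> N"
proof -
  have "measurable \<mu> N = measurable borel N" by (rule measurable_cong_sets[OF sets_eq refl])
  then show "f \<in> measurable borel N \<Longrightarrow> f \<in> measurable \<mu> N" by simp
qed

lemma meas_mu: "f \<in> borel_measurable borel \<Longrightarrow> f \<in> borel_measurable \<mu>"
  by (rule meas_mu2)

lemma mm_meas: "mat_mult n V \<in> measurable \<mu> borel"
  by (rule meas_mu2, rule borel_measurable_continuous_onI[OF cont_mm])

lemma inv_int:
  fixes f :: "cmatrix \<Rightarrow> real"
  assumes V: "unitary_mat n V" and f: "f \<in> borel_measurable borel"
  shows "integral\<^sup>L \<mu> (\<lambda>U. f (mat_mult n V U)) = integral\<^sup>L \<mu> f"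
proof -
  have "integral\<^sup>L \<mu> f = integral\<^sup>L (distr \<mu> borel (mat_mult n V)) f" using inv[OF V] by simp
  also have "\<dots> = integral\<^sup>L \<mu> (\<lambda>U. f (mat_mult n V U))"
    by (rule integral_distr[OF mm_meas f])
  finally show ?thesis by simp
qed

lemma nn_inv:
  fixes f :: "cmatrix \<Rightarrow> ennreal"
  assumes V: "unitary_mat n V" and f: "f \<in> borel_measurable borel"
  shows "(\<integral>\<^sup>+U. f (mat_mult n V U) \<partial>\<mu>) = (\<integral>\<^sup>+U. f U \<partial>\<mu>)"
proof -
  have "(\<integral>\<^sup>+U. f U \<partial>\<mu>) = (\<integral>\<^sup>+U. f U \<partial>(distr \<mu> borel (mat_mult n V)))" using inv[OF V] by simp
  also have "\<dots> = (\<integral>\<^sup>+U. f (mat_mult n V U) \<partial>\<mu>)"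
    by (rule nn_integral_distr[OF mm_meas]) (simp add: f)
  finally show ?thesis by simp
qed

lemma sw_int:
  fixes f :: "cmatrix \<Rightarrow> real"
  assumes ik: "i < n" "k < n" and f: "f \<in> borel_measurable borel"
  shows "integral\<^sup>L \<mu> (\<lambda>U. f (rsw i k U)) = integral\<^sup>L \<mu> f"
proof -
  have "integral\<^sup>L \<mu> (\<lambda>U. f (rsw i k U)) = integral\<^sup>L \<mu> (\<lambda>U. f (mat_mult n (Pm n i k) U))"
  proof (rule integral_cong_AE)
    have "rsw i k \<in> measurable borel borel" by (rule borel_measurable_continuous_onI[OF cont_rsw])
    then show "(\<lambda>U. f (rsw i k U)) \<in> borel_measurable \<mu>" using f by (intro meas_mu) (rule measurable_compose[OF _ f])
    have "mat_mult n (Pm n i k) \<in> measurable borel borel" by (rule borel_measurable_continuous_onI[OF cont_mm])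
    then show "(\<lambda>U. f (mat_mult n (Pm n i k) U)) \<in> borel_measurable \<mu>" using f by (intro meas_mu) (rule measurable_compose[OF _ f])
    show "AE U in \<mu>. f (rsw i k U) = f (mat_mult n (Pm n i k) U)"
      using AEu by eventually_elim (simp add: mm_Pm[OF unitary_zout ik])
  qed
  also have "\<dots> = integral\<^sup>L \<mu> f" by (rule inv_int[OF Pm_unitary[OF ik] f])
  finally show ?thesis .
qed

lemma h_int:
  fixes f :: "cmatrix \<Rightarrow> real"
  assumes f: "f \<in> borel_measurable borel"
  shows "integral\<^sup>L \<mu> (\<lambda>U. f (mat_mult n (Hm n) U)) = integral\<^sup>L \<mu> f"
  by (rule inv_int[OF Hm_unitary[OF n2] f])

lemma sets_pair: "sets (\<mu> \<Otimes>\<^sub>M \<mu>) = sets (borel :: (cmatrix \<times> cmatrix) measure)"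
proof -
  have "sets (\<mu> \<Otimes>\<^sub>M \<mu>) = sets ((borel::cmatrix measure) \<Otimes>\<^sub>M (borel::cmatrix measure))"
    by (rule sets_pair_measure_cong[OF sets_eq sets_eq])
  also have "\<dots> = sets (borel :: (cmatrix \<times> cmatrix) measure)" by (metis borel_prod)
  finally show ?thesis .
qed

lemma nn_adj:
  fixes g :: "cmatrix \<Rightarrow> ennreal"
  assumes g: "g \<in> borel_measurable borel"
  shows "(\<integral>\<^sup>+U. g (mat_adj n U) \<partial>\<mu>) = (\<integral>\<^sup>+U. g U \<partial>\<mu>)"
proof -
  interpret P: pair_prob_space \<mu> \<mu> by unfold_locales
  have ga: "(\<lambda>U. g (mat_adj n U)) \<in> borel_measurable borel"
    using g borel_measurable_continuous_onI[OF cont_adj] by measurable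
  have mp: "(\<lambda>x::cmatrix\<times>cmatrix. mat_mult n (mat_adj n (snd x)) (fst x)) \<in> measurable borel borel"
    by (rule borel_measurable_continuous_onI[OF cont_mm_pair])
  have gm: "(\<lambda>x::cmatrix\<times>cmatrix. g (mat_mult n (mat_adj n (snd x)) (fst x))) \<in> borel_measurable borel"
    using mp g by measurable
  then have m: "(\<lambda>x::cmatrix\<times>cmatrix. g (mat_mult n (mat_adj n (snd x)) (fst x))) \<in> borel_measurable (\<mu> \<Otimes>\<^sub>M \<mu>)"
  proof -
    have "measurable (\<mu> \<Otimes>\<^sub>M \<mu>) (borel::ennreal measure) = measurable borel borel" by (rule measurable_cong_sets[OF sets_pair refl])
    then show ?thesis using gm by simp
  qed
  have F: "(\<integral>\<^sup>+ W. (\<integral>\<^sup>+ U. g (mat_mult n (mat_adj n W) U) \<partial>\<mu>) \<partial>\<mu>) = (\<integral>\<^sup>+ U. (\<integral>\<^sup>+ W. g (mat_mult n (mat_adj n W) U) \<partial>\<mu>) \<partial>\<mu>)"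
    by (rule P.Fubini') (use m in \<open>simp add: case_prod_beta\<close>)
  have "(\<integral>\<^sup>+ W. (\<integral>\<^sup>+ U. g (mat_mult n (mat_adj n W) U) \<partial>\<mu>) \<partial>\<mu>) = (\<integral>\<^sup>+ W. (\<integral>\<^sup>+ U. g U \<partial>\<mu>) \<partial>\<mu>)"
    by (rule nn_integral_cong_AE) (use AEu in \<open>eventually_elim, simp add: nn_inv[OF unitary_adj g]\<close>)
  also have "\<dots> = (\<integral>\<^sup>+ U. g U \<partial>\<mu>)" by (simp add: emeasure_space_1)
  finally have L: "(\<integral>\<^sup>+ W. (\<integral>\<^sup>+ U. g (mat_mult n (mat_adj n W) U) \<partial>\<mu>) \<partial>\<mu>) = (\<integral>\<^sup>+ U. g U \<partial>\<mu>)" .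
  have "(\<integral>\<^sup>+ U. (\<integral>\<^sup>+ W. g (mat_mult n (mat_adj n W) U) \<partial>\<mu>) \<partial>\<mu>) = (\<integral>\<^sup>+ U. (\<integral>\<^sup>+ W. g (mat_adj n W) \<partial>\<mu>) \<partial>\<mu>)"
  proof (rule nn_integral_cong_AE)
    show "AE U in \<mu>. (\<integral>\<^sup>+ W. g (mat_mult n (mat_adj n W) U) \<partial>\<mu>) = (\<integral>\<^sup>+ W. g (mat_adj n W) \<partial>\<mu>)"
      using AEu
    proof eventually_elim
      case (elim U)
      have "(\<integral>\<^sup>+ W. g (mat_mult n (mat_adj n W) U) \<partial>\<mu>) = (\<integral>\<^sup>+ W. (\<lambda>X. g (mat_adj n X)) (mat_mult n (mat_adj n U) W) \<partial>\<mu>)"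
        using mm_adj_identity[of n _ U] by (intro nn_integral_cong) metis
      also have "\<dots> = (\<integral>\<^sup>+ W. g (mat_adj n W) \<partial>\<mu>)"
        by (rule nn_inv[OF unitary_adj[OF elim] ga])
      finally show ?case .
    qed
  qed
  also have "\<dots> = (\<integral>\<^sup>+ W. g (mat_adj n W) \<partial>\<mu>)" by (simp add: emeasure_space_1)
  finally show ?thesis using F L by simp
qed

lemma adj_int:
  fixes f :: "cmatrix \<Rightarrow> real"
  assumes f: "f \<in> borel_measurable borel" and nn: "\<And>U. 0 \<le> f U"
  shows "integral\<^sup>L \<mu> (\<lambda>U. f (mat_adj n U)) = integral\<^sup>L \<mu> f"
proof -
  have fa: "(\<lambda>U. f (mat_adj n U)) \<in> borel_measurable borel"
    using f borel_measurable_continuous_onI[OF cont_adj] by measurable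
  have "integral\<^sup>L \<mu> (\<lambda>U. f (mat_adj n U)) = enn2real (\<integral>\<^sup>+U. ennreal (f (mat_adj n U)) \<partial>\<mu>)"
    by (rule integral_eq_nn_integral) (use fa nn in \<open>auto intro: meas_mu\<close>)
  also have "\<dots> = enn2real (\<integral>\<^sup>+U. ennreal (f U) \<partial>\<mu>)"
    by (subst nn_adj[where g="\<lambda>U. ennreal (f U)"]) (use f in auto)
  also have "\<dots> = integral\<^sup>L \<mu> f"
    by (rule integral_eq_nn_integral[symmetric]) (use f nn in \<open>auto intro: meas_mu\<close>)
  finally show ?thesis .
qed

end




definition bnd :: "cmatrix measure \<Rightarrow> (cmatrix \<Rightarrow> real) \<Rightarrow> bool" where
  "bnd M f \<longleftrightarrow> f \<in> borel_measurable borel \<and> (\<exists>B. AE U in M. \<bar>f U\<bar> \<le> B)"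

lemma bnd_const[simp]: "bnd M (\<lambda>U. c)"
  unfolding bnd_def by auto

lemma bnd_add: "bnd M f \<Longrightarrow> bnd M g \<Longrightarrow> bnd M (\<lambda>U. f U + g U)"
  unfolding bnd_def
proof (elim conjE exE, intro conjI)
  fix B1 B2 assume "f \<in> borel_measurable borel" "g \<in> borel_measurable borel"
    "AE U in M. \<bar>f U\<bar> \<le> B1" "AE U in M. \<bar>g U\<bar> \<le> B2"
  then show "(\<lambda>U. f U + g U) \<in> borel_measurable borel" "\<exists>B. AE U in M. \<bar>f U + g U\<bar> \<le> B"
  proof -
    show "(\<lambda>U. f U + g U) \<in> borel_measurable borel" using \<open>f \<in> _\<close> \<open>g \<in> _\<close> by (rule borel_measurable_add)
    show "\<exists>B. AE U in M. \<bar>f U + g U\<bar> \<le> B"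
    proof (rule exI[of _ "B1 + B2"])
      show "AE U in M. \<bar>f U + g U\<bar> \<le> B1 + B2" using \<open>AE U in M. \<bar>f U\<bar> \<le> B1\<close> \<open>AE U in M. \<bar>g U\<bar> \<le> B2\<close>
      proof eventually_elim
        case (elim U)
        have "\<bar>f U + g U\<bar> \<le> \<bar>f U\<bar> + \<bar>g U\<bar>" by (rule abs_triangle_ineq)
        then show ?case using elim by linarith
      qed
    qed
  qed
qed

lemma bnd_mult: "bnd M f \<Longrightarrow> bnd M g \<Longrightarrow> bnd M (\<lambda>U. f U * g U)"
  unfolding bnd_def
proof (elim conjE exE, intro conjI)
  fix B1 B2 assume "f \<in> borel_measurable borel" "g \<in> borel_measurable borel"
    and a: "AE U in M. \<bar>f U\<bar> \<le> B1" "AE U in M. \<bar>g U\<bar> \<le> B2"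
  show "(\<lambda>U. f U * g U) \<in> borel_measurable borel" using \<open>f \<in> _\<close> \<open>g \<in> _\<close> by (rule borel_measurable_times)
  show "\<exists>B. AE U in M. \<bar>f U * g U\<bar> \<le> B"
  proof (rule exI[of _ "B1 * B2"])
    show "AE U in M. \<bar>f U * g U\<bar> \<le> B1 * B2" using a
    proof eventually_elim
      case (elim U)
      have "0 \<le> B1" using abs_ge_zero[of "f U"] elim(1) by linarith
      show ?case unfolding abs_mult by (rule mult_mono) (use elim \<open>0 \<le> B1\<close> in auto)
    qed
  qed
qed

lemma bnd_neg: "bnd M f \<Longrightarrow> bnd M (\<lambda>U. - f U)"
  using bnd_mult[of M "\<lambda>U. -1" f] by simp

lemma bnd_diff: "bnd M f \<Longrightarrow> bnd M g \<Longrightarrow> bnd M (\<lambda>U. f U - g U)"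
  using bnd_add[of M f "\<lambda>U. - g U"] bnd_neg[of M g] by simp

lemma bnd_power: "bnd M f \<Longrightarrow> bnd M (\<lambda>U. f U ^ k)"
  by (induction k) (simp_all add: bnd_mult)

lemma bnd_sum: "(\<And>i. i \<in> A \<Longrightarrow> bnd M (f i)) \<Longrightarrow> bnd M (\<lambda>U. \<Sum>i\<in>A. f i U)"
proof (induction A rule: infinite_finite_induct)
  case (insert x F) then show ?case by (simp add: bnd_add)
qed simp_all

definition ent :: "nat \<Rightarrow> nat \<Rightarrow> cmatrix \<Rightarrow> real" where
  "ent i j U = (cmod (U i j))\<^sup>2"

lemma ent_nonneg[simp]: "0 \<le> ent i j U" by (simp add: ent_def)

lemma ent_meas[measurable]: "ent i j \<in> borel_measurable borel"
  unfolding ent_def by (intro borel_measurable_continuous_onI continuous_intros cont_entry)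

lemma ent_rsw[simp]: "ent r c (rsw i k U) = ent (sw i k r) c U"
  by (simp add: ent_def rsw_def)

context haar
begin

lemma bnd_int: "bnd \<mu> f \<Longrightarrow> integrable \<mu> f"
proof -
  assume "bnd \<mu> f"
  then obtain B where m: "f \<in> borel_measurable borel" and b: "AE U in \<mu>. \<bar>f U\<bar> \<le> B"
    unfolding bnd_def by blast
  show "integrable \<mu> f"
    by (rule integrable_const_bound[where B=B]) (use b in simp, rule meas_mu[OF m])
qed

lemma bnd_ent: "bnd \<mu> (ent i j)"
  unfolding bnd_def
proof (intro conjI exI)
  show "ent i j \<in> borel_measurable borel" by (rule ent_meas)
  show "AE U in \<mu>. \<bar>ent i j U\<bar> \<le> 1" using AEu
    by (rule eventually_mono) (simp add: ent_def ent_le1)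
qed

lemma col_sum_ent: "j < n \<Longrightarrow> AE U in \<mu>. (\<Sum>i<n. ent i j U) = 1"
  using AEu by eventually_elim (simp add: ent_def col_sum)

lemma ey: assumes "i < n" "j < n" shows "integral\<^sup>L \<mu> (ent i j) = 1 / real n"
proof -
  have eq: "integral\<^sup>L \<mu> (ent r j) = integral\<^sup>L \<mu> (ent 0 j)" if "r < n" for r
  proof -
    have "integral\<^sup>L \<mu> (\<lambda>U. ent 0 j (rsw 0 r U)) = integral\<^sup>L \<mu> (ent 0 j)"
      using that n2 by (intro sw_int) auto
    moreover have "(\<lambda>U. ent 0 j (rsw 0 r U)) = ent r j" by (simp add: sw_def fun_eq_iff)
    ultimately show ?thesis by simp
  qed
  have "integral\<^sup>L \<mu> (\<lambda>U. \<Sum>r<n. ent r j U) = integral\<^sup>L \<mu> (\<lambda>U. 1)"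
  proof (rule integral_cong_AE)
    show "(\<lambda>U. \<Sum>r<n. ent r j U) \<in> borel_measurable \<mu>" by (intro meas_mu borel_measurable_sum ent_meas)
  qed (use col_sum_ent[OF assms(2)] in auto)
  then have "1 = integral\<^sup>L \<mu> (\<lambda>U. \<Sum>r<n. ent r j U)" by (simp add: prob_space)
  also have "\<dots> = (\<Sum>r<n. integral\<^sup>L \<mu> (ent r j))"
    using Bochner_Integration.integral_sum[where I="{..<n}" and M=\<mu> and f="\<lambda>r. ent r j"] by (simp add: bnd_int bnd_ent)
  also have "\<dots> = (\<Sum>r<n. integral\<^sup>L \<mu> (ent 0 j))" by (rule sum.cong) (auto intro: eq)
  also have "\<dots> = real n * integral\<^sup>L \<mu> (ent 0 j)" by simp
  finally have "integral\<^sup>L \<mu> (ent 0 j) = 1 / real n" using n2 by (simp add: field_simps)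
  then show ?thesis using eq[OF assms(1)] by argo
qed

end

lemma p4: "(x::real)^4 = x*x*x*x" by (simp add: eval_nat_numeral)

lemma h3: fixes X D p :: real assumes "p > 0" shows "D^2*X^2 \<le> X^4/(6*p) + (3*p/2)*D^4"
proof -
  have "0 \<le> (X^2 - 3*p*D^2)^2" by simp
  then have "6*p*(D^2*X^2) \<le> X^4 + 9*p^2*D^4" by (simp add: power2_eq_square p4 algebra_simps)
  then have "D^2*X^2 \<le> (X^4 + 9*p^2*D^4)/(6*p)" using assms by (simp add: field_simps)
  also have "\<dots> = X^4/(6*p) + (3*p/2)*D^4" using assms by (simp add: field_simps power2_eq_square)
  finally show ?thesis .
qed

lemma key_ineq: fixes X D p :: real assumes p: "p > 0"
  shows "D*(X^3 - (X-D)^3) \<le> (X^4 + (X-D)^4)/(4*p) + (9*p/2)*D^4"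
proof -
  define Y where "Y = X - D"
  have h1: "D*(X^3-Y^3) = D^2*(X^2 + X*Y + Y^2)" unfolding Y_def by (simp add: power2_eq_square power3_eq_cube algebra_simps)
  have h2: "X*Y \<le> (X^2+Y^2)/2" using sum_squares_ge_zero[of "X-Y" 0] by (simp add: power2_eq_square algebra_simps)
  have "D^2*(X^2 + X*Y + Y^2) \<le> D^2*((3/2)*(X^2+Y^2))" using h2 by (intro mult_left_mono) auto
  also have "\<dots> = (3/2)*(D^2*X^2 + D^2*Y^2)" by (simp add: algebra_simps)
  also have "\<dots> \<le> (3/2)*((X^4/(6*p) + (3*p/2)*D^4) + (Y^4/(6*p) + (3*p/2)*D^4))"
    using h3[OF p, of D X] h3[OF p, of D Y] by simp
  also have "\<dots> = (X^4 + Y^4)/(4*p) + (9*p/2)*D^4" using p by (simp add: field_simps)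
  finally show ?thesis using h1 unfolding Y_def by simp
qed

lemma pow4_diff: fixes u v :: real shows "(u - v)^4 \<le> 8*(u^4 + v^4)"
proof -
  have a: "(u-v)^2 \<le> 2*(u^2+v^2)" using sum_squares_ge_zero[of "u+v" 0] by (simp add: power2_eq_square algebra_simps)
  have "(u-v)^4 = ((u-v)^2)^2" by simp
  also have "\<dots> \<le> (2*(u^2+v^2))^2" using a by (intro power_mono) auto
  also have "\<dots> \<le> 8*(u^4+v^4)" using sum_squares_ge_zero[of "u^2-v^2" 0] by (simp add: power2_eq_square p4 algebra_simps)
  finally show ?thesis .
qed

lemma bnd_meas: "bnd M f \<Longrightarrow> f \<in> borel_measurable borel" by (simp add: bnd_def)

lemma bnd_divide: "bnd M f \<Longrightarrow> bnd M (\<lambda>U. f U / c)"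
  using bnd_mult[of M f "\<lambda>U. 1 / c"] by simp

definition dd :: "nat \<Rightarrow> nat \<Rightarrow> nat \<Rightarrow> cmatrix \<Rightarrow> real" where
  "dd n q i U = (\<Sum>j<q. ent i j U) - real q / real n"

definition XX :: "nat \<Rightarrow> nat \<Rightarrow> nat \<Rightarrow> cmatrix \<Rightarrow> real" where
  "XX n p q U = (\<Sum>i<p. dd n q i U)"

lemma dd_rsw[simp]: "dd n q r (rsw i k U) = dd n q (sw i k r) U" by (simp add: dd_def)

lemma sum_sw: fixes f :: "nat \<Rightarrow> real" assumes "i < p" "p \<le> k"
  shows "(\<Sum>r<p. f (sw i k r)) = (\<Sum>r<p. f r) - f i + f k"
proof -
  have A: "(\<Sum>r<p. f (sw i k r)) = f (sw i k i) + (\<Sum>r\<in>{..<p}-{i}. f (sw i k r))"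
    using assms by (subst sum.remove[of _ i]) auto
  have B: "(\<Sum>r\<in>{..<p}-{i}. f (sw i k r)) = (\<Sum>r\<in>{..<p}-{i}. f r)"
    using assms by (intro sum.cong) (auto simp: sw_def)
  have C: "(\<Sum>r<p. f r) = f i + (\<Sum>r\<in>{..<p}-{i}. f r)"
    using assms by (subst sum.remove[of _ i]) auto
  show ?thesis using A B C by (simp add: sw_def)
qed

lemma XX_rsw: "i < p \<Longrightarrow> p \<le> k \<Longrightarrow> XX n p q (rsw i k U) = XX n p q U - dd n q i U + dd n q k U"
  unfolding XX_def dd_rsw by (rule sum_sw[of i p k "\<lambda>r. dd n q r U"])

lemma dd_fun: "dd n q i = (\<lambda>U. (\<Sum>j<q. ent i j U) - real q / real n)" by (simp add: fun_eq_iff dd_def)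
lemma XX_fun: "XX n p q = (\<lambda>U. \<Sum>i<p. dd n q i U)" by (simp add: fun_eq_iff XX_def)

context haar
begin

lemma bnd_dd: "bnd \<mu> (dd n q i)"
  unfolding dd_fun by (intro bnd_diff bnd_const bnd_sum[where f="\<lambda>j. ent i j"] bnd_ent)

lemma bnd_XX: "bnd \<mu> (XX n p q)"
  unfolding XX_fun by (intro bnd_sum[where f="\<lambda>i. dd n q i"] bnd_dd)

lemma bm: "bnd \<mu> f \<Longrightarrow> f \<in> borel_measurable borel" by (rule bnd_meas)

lemmas bnd_intros = bnd_add bnd_mult bnd_diff bnd_power bnd_const bnd_neg bnd_divide bnd_ent bnd_dd bnd_XX

lemma zero_sum: assumes q: "q \<le> n" shows "AE U in \<mu>. (\<Sum>r<n. dd n q r U) = 0"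
proof -
  have "AE U in \<mu>. \<forall>j\<in>{..<q}. (\<Sum>r<n. ent r j U) = 1"
    using q by (intro eventually_ball_finite) (auto intro: col_sum_ent)
  then show ?thesis
  proof eventually_elim
    case (elim U)
    have "(\<Sum>r<n. dd n q r U) = (\<Sum>r<n. \<Sum>j<q. ent r j U) - real n * (real q / real n)"
      by (simp add: dd_def sum_subtractf)
    also have "(\<Sum>r<n. \<Sum>j<q. ent r j U) = (\<Sum>j<q. \<Sum>r<n. ent r j U)" by (rule sum.swap)
    also have "\<dots> = (\<Sum>j<q. 1)" using elim by (intro sum.cong) auto
    finally show ?case using n2 by simp
  qed
qed

lemma dd4: assumes "i < n" shows "integral\<^sup>L \<mu> (\<lambda>U. (dd n q i U)^4) = integral\<^sup>L \<mu> (\<lambda>U. (dd n q 0 U)^4)"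
proof -
  have "integral\<^sup>L \<mu> (\<lambda>U. (\<lambda>V. (dd n q 0 V)^4) (rsw 0 i U)) = integral\<^sup>L \<mu> (\<lambda>U. (dd n q 0 U)^4)"
    using assms n2 by (intro sw_int bm bnd_intros) auto
  moreover have "(\<lambda>U. (\<lambda>V. (dd n q 0 V)^4) (rsw 0 i U)) = (\<lambda>U. (dd n q i U)^4)"
    by (simp add: sw_def)
  ultimately show ?thesis by simp
qed

end


context haar
begin

lemma step:
  assumes ik: "i < p" "p \<le> k" "k < n" and p: "1 \<le> p"
  shows "integral\<^sup>L \<mu> (\<lambda>U. (dd n q i U - dd n q k U) * (XX n p q U)^3)
     \<le> integral\<^sup>L \<mu> (\<lambda>U. (XX n p q U)^4) / (4 * real p) + 36 * real p * integral\<^sup>L \<mu> (\<lambda>U. (dd n q 0 U)^4)"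
proof -
  define D where "D = (\<lambda>U. dd n q i U - dd n q k U)"
  define X where "X = XX n p q"
  define a where "a = integral\<^sup>L \<mu> (\<lambda>U. (dd n q 0 U)^4)"
  define E4 where "E4 = integral\<^sup>L \<mu> (\<lambda>U. (X U)^4)"
  have i: "i < n" using ik by simp
  have bD: "bnd \<mu> D" unfolding D_def by (intro bnd_intros)
  have bX: "bnd \<mu> X" unfolding X_def by (intro bnd_intros)
  have rX: "X (rsw i k U) = X U - D U" for U using ik unfolding X_def D_def by (simp add: XX_rsw)
  have rD: "D (rsw i k U) = - D U" for U using ik unfolding D_def by (simp add: sw_def)
  have e1: "integral\<^sup>L \<mu> (\<lambda>U. D U * (X U - D U)^3) = - integral\<^sup>L \<mu> (\<lambda>U. D U * X U ^3)"
  proof -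
    have "integral\<^sup>L \<mu> (\<lambda>U. (\<lambda>V. D V * X V ^3) (rsw i k U)) = integral\<^sup>L \<mu> (\<lambda>U. D U * X U ^3)"
      using ik by (intro sw_int bm bnd_intros bD bX) auto
    moreover have "(\<lambda>U. (\<lambda>V. D V * X V ^3) (rsw i k U)) = (\<lambda>U. - (D U * (X U - D U)^3))"
      by (simp add: rX rD)
    ultimately show ?thesis by simp
  qed
  have e2: "integral\<^sup>L \<mu> (\<lambda>U. (X U - D U)^4) = E4"
  proof -
    have "integral\<^sup>L \<mu> (\<lambda>U. (\<lambda>V. X V ^4) (rsw i k U)) = integral\<^sup>L \<mu> (\<lambda>U. X U ^4)"
      using ik by (intro sw_int bm bnd_intros bD bX) auto
    then show ?thesis by (simp add: rX E4_def)
  qed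
  have e3: "integral\<^sup>L \<mu> (\<lambda>U. D U ^ 4) \<le> 16 * a"
  proof -
    have "integral\<^sup>L \<mu> (\<lambda>U. D U ^ 4) \<le> integral\<^sup>L \<mu> (\<lambda>U. 8 * ((dd n q i U)^4 + (dd n q k U)^4))"
      unfolding D_def by (intro integral_mono bnd_int bnd_intros pow4_diff)
    also have "\<dots> = 8 * (integral\<^sup>L \<mu> (\<lambda>U. (dd n q i U)^4) + integral\<^sup>L \<mu> (\<lambda>U. (dd n q k U)^4))"
      by (simp add: Bochner_Integration.integral_add bnd_int bnd_intros)
    also have "\<dots> = 16 * a" using dd4[OF i] dd4[OF ik(3)] by (simp add: a_def)
    finally show ?thesis .
  qed
  have pp: "0 < real p" using p by simp
  have key: "integral\<^sup>L \<mu> (\<lambda>U. D U * (X U ^3 - (X U - D U)^3))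
      \<le> integral\<^sup>L \<mu> (\<lambda>U. (X U ^4 + (X U - D U)^4)/(4 * real p) + (9 * real p / 2) * D U ^4)"
    by (intro integral_mono bnd_int bnd_intros bD bX key_ineq pp)
  have L: "integral\<^sup>L \<mu> (\<lambda>U. D U * (X U ^3 - (X U - D U)^3)) = 2 * integral\<^sup>L \<mu> (\<lambda>U. D U * X U ^3)"
  proof -
    have "integral\<^sup>L \<mu> (\<lambda>U. D U * (X U ^3 - (X U - D U)^3)) = integral\<^sup>L \<mu> (\<lambda>U. D U * X U ^3 - D U * (X U - D U)^3)"
      by (simp add: right_diff_distrib)
    also have "\<dots> = integral\<^sup>L \<mu> (\<lambda>U. D U * X U ^3) - integral\<^sup>L \<mu> (\<lambda>U. D U * (X U - D U)^3)"
      by (intro Bochner_Integration.integral_diff bnd_int bnd_intros bD bX)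
    finally show ?thesis using e1 by simp
  qed
  have R: "integral\<^sup>L \<mu> (\<lambda>U. (X U ^4 + (X U - D U)^4)/(4 * real p) + (9 * real p / 2) * D U ^4)
      = (E4 + E4) / (4 * real p) + (9 * real p / 2) * integral\<^sup>L \<mu> (\<lambda>U. D U ^4)"
  proof -
    have "integral\<^sup>L \<mu> (\<lambda>U. (X U ^4 + (X U - D U)^4)/(4 * real p) + (9 * real p / 2) * D U ^4)
      = integral\<^sup>L \<mu> (\<lambda>U. (X U ^4 + (X U - D U)^4)/(4 * real p)) + integral\<^sup>L \<mu> (\<lambda>U. (9 * real p / 2) * D U ^4)"
      by (intro Bochner_Integration.integral_add bnd_int bnd_intros bD bX)
    also have "integral\<^sup>L \<mu> (\<lambda>U. (X U ^4 + (X U - D U)^4)/(4 * real p)) = (E4 + E4) / (4 * real p)"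
    proof -
      have "integral\<^sup>L \<mu> (\<lambda>U. X U ^4 + (X U - D U)^4) = integral\<^sup>L \<mu> (\<lambda>U. X U ^4) + integral\<^sup>L \<mu> (\<lambda>U. (X U - D U)^4)"
        by (intro Bochner_Integration.integral_add bnd_int bnd_intros bD bX)
      then have "integral\<^sup>L \<mu> (\<lambda>U. X U ^4 + (X U - D U)^4) = E4 + E4"
        using e2 unfolding E4_def by simp
      then show ?thesis by simp
    qed
    finally show ?thesis by simp
  qed
  have "2 * integral\<^sup>L \<mu> (\<lambda>U. D U * X U ^3) \<le> (E4 + E4) / (4 * real p) + (9 * real p / 2) * (16 * a)"
  proof -
    have "(9 * real p / 2) * integral\<^sup>L \<mu> (\<lambda>U. D U ^4) \<le> (9 * real p / 2) * (16 * a)"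
      by (rule mult_left_mono[OF e3]) (use pp in simp)
    then show ?thesis using key L R by linarith
  qed
  then have "integral\<^sup>L \<mu> (\<lambda>U. D U * X U ^3) \<le> E4 / (4 * real p) + 36 * real p * a"
    using pp by (simp add: field_simps)
  then show ?thesis by (simp add: D_def X_def E4_def a_def)
qed

end


context haar
begin

lemma pairbound:
  assumes p: "1 \<le> p" "p \<le> n" and q: "q \<le> n"
  shows "integral\<^sup>L \<mu> (\<lambda>U. (XX n p q U)^4) \<le> 48 * (real p)^2 * integral\<^sup>L \<mu> (\<lambda>U. (dd n q 0 U)^4)"
proof -
  define X where "X = XX n p q"
  define a where "a = integral\<^sup>L \<mu> (\<lambda>U. (dd n q 0 U)^4)"
  define E4 where "E4 = integral\<^sup>L \<mu> (\<lambda>U. (X U)^4)"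
  define F where "F = (\<lambda>i k U. (dd n q i U - dd n q k U) * (X U)^3)"
  have a0: "0 \<le> a" unfolding a_def by (intro integral_nonneg_AE) auto
  have E0: "0 \<le> E4" unfolding E4_def by (intro integral_nonneg_AE) (auto simp: zero_le_even_power)
  have bF: "bnd \<mu> (F i k)" for i k unfolding F_def X_def by (intro bnd_intros)
  have sumD: "AE U in \<mu>. (\<Sum>i<p. \<Sum>k\<in>{p..<n}. F i k U) = real n * (X U)^4"
    using zero_sum[OF q]
  proof eventually_elim
    case (elim U)
    have split: "(\<Sum>k<n. dd n q k U) = X U + (\<Sum>k\<in>{p..<n}. dd n q k U)"
      unfolding X_def XX_def lessThan_atLeast0 using p by (simp add: sum.atLeastLessThan_concat)
    have Sc: "(\<Sum>k\<in>{p..<n}. dd n q k U) = - X U" using split elim by simp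
    have "(\<Sum>i<p. \<Sum>k\<in>{p..<n}. F i k U) = (X U)^3 * (\<Sum>i<p. \<Sum>k\<in>{p..<n}. (dd n q i U - dd n q k U))"
      unfolding F_def by (simp add: sum_distrib_left mult.commute)
    also have "(\<Sum>i<p. \<Sum>k\<in>{p..<n}. (dd n q i U - dd n q k U)) = (\<Sum>i<p. real (n - p) * dd n q i U + X U)"
      by (simp add: sum_subtractf Sc)
    also have "\<dots> = real (n - p) * X U + real p * X U"
      by (simp add: sum.distrib sum_distrib_left[symmetric] X_def XX_def)
    also have "\<dots> = real n * X U" using p by (simp add: of_nat_diff algebra_simps)
    finally show ?case by (simp add: power_numeral_reduce algebra_simps eval_nat_numeral)
  qed
  have "real n * E4 = integral\<^sup>L \<mu> (\<lambda>U. \<Sum>i<p. \<Sum>k\<in>{p..<n}. F i k U)"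
  proof -
    have "integral\<^sup>L \<mu> (\<lambda>U. \<Sum>i<p. \<Sum>k\<in>{p..<n}. F i k U) = integral\<^sup>L \<mu> (\<lambda>U. real n * (X U)^4)"
    proof (rule integral_cong_AE)
      show "(\<lambda>U. \<Sum>i<p. \<Sum>k\<in>{p..<n}. F i k U) \<in> borel_measurable \<mu>"
        by (intro meas_mu bm bnd_sum bF)
      show "(\<lambda>U. real n * (X U)^4) \<in> borel_measurable \<mu>"
        unfolding X_def by (intro meas_mu bm bnd_intros)
    qed (rule sumD)
    then show ?thesis by (simp add: E4_def)
  qed
  also have "\<dots> = (\<Sum>i<p. \<Sum>k\<in>{p..<n}. integral\<^sup>L \<mu> (F i k))"
  proof -
    have "integral\<^sup>L \<mu> (\<lambda>U. \<Sum>i<p. \<Sum>k\<in>{p..<n}. F i k U) = (\<Sum>i<p. integral\<^sup>L \<mu> (\<lambda>U. \<Sum>k\<in>{p..<n}. F i k U))"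
      by (rule Bochner_Integration.integral_sum) (intro bnd_int bnd_sum bF)
    also have "\<dots> = (\<Sum>i<p. \<Sum>k\<in>{p..<n}. integral\<^sup>L \<mu> (F i k))"
      by (intro sum.cong refl Bochner_Integration.integral_sum bnd_int bF)
    finally show ?thesis .
  qed
  also have "\<dots> \<le> (\<Sum>i<p. \<Sum>k\<in>{p..<n}. E4 / (4 * real p) + 36 * real p * a)"
  proof (intro sum_mono)
    fix i k assume "i \<in> {..<p}" "k \<in> {p..<n}"
    then show "integral\<^sup>L \<mu> (F i k) \<le> E4 / (4 * real p) + 36 * real p * a"
      using step[of i p k q] p unfolding F_def E4_def a_def X_def by simp
  qed
  also have "\<dots> = real p * (real (n - p) * (E4 / (4 * real p) + 36 * real p * a))" by simp
  also have "\<dots> = real (n - p) * E4 / 4 + 36 * (real p)^2 * real (n - p) * a"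
    using p by (simp add: field_simps power2_eq_square)
  also have "\<dots> \<le> real n * E4 / 4 + 36 * (real p)^2 * real n * a"
  proof -
    have "real (n - p) \<le> real n" by simp
    then have "real (n - p) * E4 \<le> real n * E4" using E0 by (rule mult_right_mono)
    moreover have "36 * (real p)^2 * real (n - p) * a \<le> 36 * (real p)^2 * real n * a"
      using a0 by (intro mult_right_mono mult_left_mono) auto
    ultimately show ?thesis by linarith
  qed
  finally have "real n * E4 \<le> real n * E4 / 4 + 36 * (real p)^2 * real n * a" .
  then have "real n * (3 * E4) \<le> real n * (144 * (real p)^2 * a)" by (simp add: algebra_simps)
  then have "3 * E4 \<le> 144 * (real p)^2 * a" using n2 by (simp add: mult_le_cancel_left)
  then show ?thesis unfolding E4_def a_def X_def by simp
qed

end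

lemma real_step:
  fixes Z V A B :: real
  assumes nn: "0 \<le> Z" "0 \<le> V" "0 \<le> A" "0 \<le> B" and a: "1 \<le> a"
    and c: "4 * V < Z \<Longrightarrow> Z / 8 \<le> A \<and> Z / 8 \<le> B"
  shows "Z ^ a \<le> 4 * Z ^ (a - 1) * V + 8 ^ a * A ^ (a - 1) * B"
proof -
  obtain b where b: "a = Suc b" using a by (cases a) auto
  have t1: "0 \<le> 4 * Z ^ b * V" using nn by simp
  have t2: "0 \<le> 8 ^ Suc b * A ^ b * B" using nn by simp
  have "Z ^ Suc b \<le> 4 * Z ^ b * V + 8 ^ Suc b * A ^ b * B"
  proof (cases "4 * V < Z")
    case False
    then have "Z ^ b * Z \<le> Z ^ b * (4 * V)" using nn by (intro mult_left_mono) auto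
    then show ?thesis using t2 by (simp add: algebra_simps)
  next
    case True
    with c have AB: "Z / 8 \<le> A" "Z / 8 \<le> B" by auto
    have "(Z / 8) ^ b * (Z / 8) \<le> A ^ b * B"
      using AB nn by (intro mult_mono power_mono) auto
    moreover have "(Z / 8) ^ b * (Z / 8) = Z ^ Suc b / 8 ^ Suc b"
      by (simp add: power_divide mult.commute)
    ultimately have "Z ^ Suc b \<le> 8 ^ Suc b * (A ^ b * B)" by (simp add: field_simps)
    then show ?thesis using t1 by (simp add: algebra_simps)
  qed
  then show ?thesis using b by simp
qed

lemma cmod_sq2: "(cmod (sq2 * w))^2 = (cmod w)^2 / 2"
proof -
  have "cmod sq2 = 1 / sqrt 2" unfolding sq2_def norm_of_real by simp
  then have "(cmod (sq2 * w))^2 = (1 / sqrt 2)^2 * (cmod w)^2" by (simp only: norm_mult power_mult_distrib)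
  also have "(1 / sqrt 2)^2 = (1/2::real)" by (simp add: power_divide)
  finally show ?thesis by simp
qed

lemma hineq:
  fixes u v :: complex assumes a: "1 \<le> a"
  shows "((cmod u)^2)^a \<le> 4 * ((cmod u)^2)^(a-1) * (cmod v)^2
     + 8^a * ((cmod (sq2*(u+v)))^2)^(a-1) * (cmod (sq2*(u-v)))^2"
proof (rule real_step[OF _ _ _ _ a])
  assume h: "4 * (cmod v)\<^sup>2 < (cmod u)\<^sup>2"
  have "(2 * cmod v)^2 < (cmod u)^2" using h by (simp add: power_mult_distrib)
  then have lt: "2 * cmod v < cmod u" by (rule power_less_imp_less_base) simp
  have "cmod u - cmod v \<le> cmod (u + v)" by (rule norm_diff_ineq)
  then have "cmod u / 2 \<le> cmod (u + v)" using lt by linarith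
  then have "(cmod u / 2)^2 \<le> (cmod (u + v))^2" by (intro power_mono) auto
  then have p1: "(cmod u)\<^sup>2 / 8 \<le> (cmod (sq2 * (u + v)))\<^sup>2" by (simp add: cmod_sq2 power_divide)
  have "cmod u - cmod v \<le> cmod (u - v)" by (rule norm_triangle_ineq2)
  then have "cmod u / 2 \<le> cmod (u - v)" using lt by linarith
  then have "(cmod u / 2)^2 \<le> (cmod (u - v))^2" by (intro power_mono) auto
  then have p2: "(cmod u)\<^sup>2 / 8 \<le> (cmod (sq2 * (u - v)))\<^sup>2" by (simp add: cmod_sq2 power_divide)
  show "(cmod u)\<^sup>2 / 8 \<le> (cmod (sq2 * (u + v)))\<^sup>2 \<and> (cmod u)\<^sup>2 / 8 \<le> (cmod (sq2 * (u - v)))\<^sup>2"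
    using p1 p2 by simp
qed simp_all

lemma pow4_shift: fixes z c :: real assumes "0 \<le> z" "0 \<le> c" shows "(z - c)^4 \<le> z^4 + c^4"
proof (cases "c \<le> z")
  case True
  then have "(z - c)^4 \<le> z^4" using assms by (intro power_mono) auto
  moreover have "0 \<le> c^4" using assms by simp
  ultimately show ?thesis by linarith
next
  case False
  have "(z - c)^4 = (c - z)^4" by (simp add: eval_nat_numeral algebra_simps)
  also have "\<dots> \<le> c^4" using False assms by (intro power_mono) auto
  finally have "(z - c)^4 \<le> c^4" .
  moreover have "0 \<le> z^4" using assms by simp
  ultimately show ?thesis by linarith
qed

definition hz :: "cmatrix \<Rightarrow> real" where "hz U = (cmod (sq2 * (U 0 0 + U 1 0)))\<^sup>2"
definition hw :: "cmatrix \<Rightarrow> real" where "hw U = (cmod (sq2 * (U 0 0 - U 1 0)))\<^sup>2"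

lemma cmod_sq2_le: "cmod (sq2 * w) \<le> cmod w"
proof -
  have "cmod sq2 = 1 / sqrt 2" unfolding sq2_def norm_of_real by simp
  then have s: "cmod (sq2 * w) = (1 / sqrt 2) * cmod w" by (simp add: norm_mult)
  have "1 \<le> sqrt (2::real)" using real_sqrt_le_mono[of 1 2] by simp
  then have "1 / sqrt 2 \<le> (1::real)" by (simp add: divide_le_eq)
  then have "(1 / sqrt 2) * cmod w \<le> 1 * cmod w" by (intro mult_right_mono) auto
  then show ?thesis by (simp add: s)
qed

context haar
begin

lemma entry_le1: "unitary_mat n U \<Longrightarrow> cmod (U i j) \<le> 1"
  using ent_le1[of n U i j] by (simp add: power_le_one_iff abs_le_square_iff[symmetric])

lemma bnd_hz: "bnd \<mu> hz" and bnd_hw: "bnd \<mu> hw"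
proof -
  have m1: "hz \<in> borel_measurable borel" unfolding hz_def
    by (intro borel_measurable_continuous_onI continuous_intros cont_entry)
  have m2: "hw \<in> borel_measurable borel" unfolding hw_def
    by (intro borel_measurable_continuous_onI continuous_intros cont_entry)
  have b: "(cmod (sq2 * (u + v)))\<^sup>2 \<le> 4" "(cmod (sq2 * (u - v)))\<^sup>2 \<le> 4" if "cmod u \<le> 1" "cmod v \<le> 1" for u v
  proof -
    have "cmod (sq2 * (u + v)) \<le> 2" using cmod_sq2_le[of "u+v"] norm_triangle_ineq[of u v] that by linarith
    then show "(cmod (sq2 * (u + v)))\<^sup>2 \<le> 4" using power_mono[of _ 2 2] by fastforce
    have "cmod (sq2 * (u - v)) \<le> 2" using cmod_sq2_le[of "u-v"] norm_triangle_ineq4[of u v] that by linarith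
    then show "(cmod (sq2 * (u - v)))\<^sup>2 \<le> 4" using power_mono[of _ 2 2] by fastforce
  qed
  show "bnd \<mu> hz" unfolding bnd_def
  proof (intro conjI exI[of _ 4] m1)
    show "AE U in \<mu>. \<bar>hz U\<bar> \<le> 4" using AEu by (rule eventually_mono) (simp add: hz_def b(1) entry_le1)
  qed
  show "bnd \<mu> hw" unfolding bnd_def
  proof (intro conjI exI[of _ 4] m2)
    show "AE U in \<mu>. \<bar>hw U\<bar> \<le> 4" using AEu by (rule eventually_mono) (simp add: hw_def b(2) entry_le1)
  qed
qed

lemma ent_H: "ent 0 0 (mat_mult n (Hm n) U) = hz U" "ent 1 0 (mat_mult n (Hm n) U) = hw U"
  by (simp_all only: ent_def hz_def hw_def mm_Hm0[OF n2] mm_Hm1[OF n2])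

lemma z_step: assumes a: "1 \<le> a"
  shows "integral\<^sup>L \<mu> (\<lambda>U. ent 0 0 U ^ a) \<le> (4 + 8^a) * integral\<^sup>L \<mu> (\<lambda>U. ent 0 0 U ^ (a-1) * ent 1 0 U)"
proof -
  define G where "G = integral\<^sup>L \<mu> (\<lambda>U. ent 0 0 U ^ (a-1) * ent 1 0 U)"
  have ph: "ent 0 0 U ^ a \<le> 4 * (ent 0 0 U^(a-1) * ent 1 0 U) + 8^a * (hz U ^(a-1) * hw U)" for U
    using hineq[OF a, of "U 0 0" "U 1 0"] by (simp add: ent_def hz_def hw_def algebra_simps)
  have hi: "integral\<^sup>L \<mu> (\<lambda>U. (\<lambda>V. ent 0 0 V^(a-1) * ent 1 0 V) (mat_mult n (Hm n) U)) = G"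
    unfolding G_def by (rule h_int) (intro bm bnd_intros)
  then have hi': "integral\<^sup>L \<mu> (\<lambda>U. hz U ^(a-1) * hw U) = G" by (simp only: ent_H)
  have "integral\<^sup>L \<mu> (\<lambda>U. ent 0 0 U ^ a) \<le> integral\<^sup>L \<mu> (\<lambda>U. 4 * (ent 0 0 U^(a-1) * ent 1 0 U) + 8^a * (hz U ^(a-1) * hw U))"
    by (intro integral_mono bnd_int bnd_intros bnd_hz bnd_hw ph)
  also have "\<dots> = integral\<^sup>L \<mu> (\<lambda>U. 4 * (ent 0 0 U^(a-1) * ent 1 0 U)) + integral\<^sup>L \<mu> (\<lambda>U. 8^a * (hz U ^(a-1) * hw U))"
    by (intro Bochner_Integration.integral_add bnd_int bnd_intros bnd_hz bnd_hw)
  also have "\<dots> = 4 * G + 8^a * G" using hi' by (simp add: G_def)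
  finally show ?thesis by (simp add: G_def algebra_simps)
qed

lemma w_sum: assumes a: "1 \<le> a"
  shows "real (n - 1) * integral\<^sup>L \<mu> (\<lambda>U. ent 0 0 U ^ (a-1) * ent 1 0 U) \<le> integral\<^sup>L \<mu> (\<lambda>U. ent 0 0 U ^ (a-1))"
proof -
  define G where "G = integral\<^sup>L \<mu> (\<lambda>U. ent 0 0 U ^ (a-1) * ent 1 0 U)"
  have eqi: "integral\<^sup>L \<mu> (\<lambda>U. ent 0 0 U ^ (a-1) * ent i 0 U) = G" if i: "1 \<le> i" "i < n" for i
  proof -
    have "integral\<^sup>L \<mu> (\<lambda>U. (\<lambda>V. ent 0 0 V ^ (a-1) * ent 1 0 V) (rsw 1 i U)) = G"
      unfolding G_def using i n2 by (intro sw_int bm bnd_intros) auto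
    moreover have "(\<lambda>U. (\<lambda>V. ent 0 0 V ^ (a-1) * ent 1 0 V) (rsw 1 i U)) = (\<lambda>U. ent 0 0 U ^ (a-1) * ent i 0 U)"
      using i by (simp add: sw_def)
    ultimately show ?thesis by simp
  qed
  have AEs: "AE U in \<mu>. (\<Sum>i\<in>{1..<n}. ent 0 0 U ^ (a-1) * ent i 0 U) = ent 0 0 U ^ (a-1) - ent 0 0 U ^ (a-1) * ent 0 0 U"
  proof -
    have cs: "AE U in \<mu>. (\<Sum>i<n. ent i 0 U) = 1" using n2 by (intro col_sum_ent) simp
    then show ?thesis
  proof eventually_elim
    case (elim U)
    have "(\<Sum>i<n. ent i 0 U) = ent 0 0 U + (\<Sum>i\<in>{1..<n}. ent i 0 U)"
      using n2 unfolding lessThan_atLeast0 by (subst sum.atLeast_Suc_lessThan) auto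
    then have "(\<Sum>i\<in>{1..<n}. ent i 0 U) = 1 - ent 0 0 U" using elim by simp
    moreover have "(\<Sum>i\<in>{1..<n}. ent 0 0 U ^ (a-1) * ent i 0 U) = ent 0 0 U ^ (a-1) * (\<Sum>i\<in>{1..<n}. ent i 0 U)"
      by (simp add: sum_distrib_left)
    ultimately show ?case by (simp add: right_diff_distrib)
  qed
  qed
  have "real (n - 1) * G = (\<Sum>i\<in>{1..<n}. integral\<^sup>L \<mu> (\<lambda>U. ent 0 0 U ^ (a-1) * ent i 0 U))"
    using eqi by simp
  also have "\<dots> = integral\<^sup>L \<mu> (\<lambda>U. \<Sum>i\<in>{1..<n}. ent 0 0 U ^ (a-1) * ent i 0 U)"
    by (rule Bochner_Integration.integral_sum[symmetric]) (intro bnd_int bnd_intros)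
  also have "\<dots> = integral\<^sup>L \<mu> (\<lambda>U. ent 0 0 U ^ (a-1) - ent 0 0 U ^ (a-1) * ent 0 0 U)"
  proof (rule integral_cong_AE)
    show "(\<lambda>U. \<Sum>i\<in>{1..<n}. ent 0 0 U ^ (a-1) * ent i 0 U) \<in> borel_measurable \<mu>"
      by (intro meas_mu bm bnd_sum bnd_intros)
    show "(\<lambda>U. ent 0 0 U ^ (a-1) - ent 0 0 U ^ (a-1) * ent 0 0 U) \<in> borel_measurable \<mu>"
      by (intro meas_mu bm bnd_intros)
  qed (rule AEs)
  also have "\<dots> = integral\<^sup>L \<mu> (\<lambda>U. ent 0 0 U ^ (a-1)) - integral\<^sup>L \<mu> (\<lambda>U. ent 0 0 U ^ (a-1) * ent 0 0 U)"
    by (intro Bochner_Integration.integral_diff bnd_int bnd_intros)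
  also have "\<dots> \<le> integral\<^sup>L \<mu> (\<lambda>U. ent 0 0 U ^ (a-1))"
  proof -
    have "0 \<le> integral\<^sup>L \<mu> (\<lambda>U. ent 0 0 U ^ (a-1) * ent 0 0 U)" by (intro integral_nonneg_AE) auto
    then show ?thesis by linarith
  qed
  finally show ?thesis by (simp add: G_def)
qed

lemma z_chain: assumes a: "2 \<le> a" "a \<le> 4"
  shows "integral\<^sup>L \<mu> (\<lambda>U. ent 0 0 U ^ a) \<le> 4100 / real (n - 1) * integral\<^sup>L \<mu> (\<lambda>U. ent 0 0 U ^ (a-1))"
proof -
  define G where "G = integral\<^sup>L \<mu> (\<lambda>U. ent 0 0 U ^ (a-1) * ent 1 0 U)"
  have G0: "0 \<le> G" unfolding G_def by (intro integral_nonneg_AE) auto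
  have "(8::real)^a \<le> 8^4" using a by (intro power_increasing) auto
  then have K: "4 + (8::real)^a \<le> 4100" by simp
  have "integral\<^sup>L \<mu> (\<lambda>U. ent 0 0 U ^ a) \<le> (4 + 8^a) * G" using z_step[of a] a by (simp add: G_def)
  also have "\<dots> \<le> 4100 * G" using K G0 by (intro mult_right_mono) auto
  also have "\<dots> \<le> 4100 / real (n - 1) * integral\<^sup>L \<mu> (\<lambda>U. ent 0 0 U ^ (a-1))"
  proof -
    have "real (n - 1) * G \<le> integral\<^sup>L \<mu> (\<lambda>U. ent 0 0 U ^ (a-1))" using w_sum[of a] a by (simp add: G_def)
    moreover have "0 < real (n - 1)" using n2 by simp
    ultimately show ?thesis by (simp add: field_simps)
  qed
  finally show ?thesis .
qed

lemma z4: "integral\<^sup>L \<mu> (\<lambda>U. ent 0 0 U ^ 4) \<le> 8 * 4100^3 / (real n)^4"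
proof -
  define c where "c = 4100 / real (n - 1)"
  define e where "e = (\<lambda>k. integral\<^sup>L \<mu> (\<lambda>U. ent 0 0 U ^ k))"
  have c0: "0 \<le> c" unfolding c_def by simp
  have e1: "e 1 = 1 / real n" unfolding e_def using ey[of 0 0] n2 by simp
  have e2: "e 2 \<le> c * e 1" using z_chain[of 2] unfolding e_def c_def by simp
  have e3: "e 3 \<le> c * e 2" using z_chain[of 3] unfolding e_def c_def by simp
  have e4: "e 4 \<le> c * e 3" using z_chain[of 4] unfolding e_def c_def by simp
  have "e 4 \<le> c * (c * (c * e 1))"
    using e2 e3 e4 c0 by (meson mult_left_mono order_trans)
  also have "\<dots> = 4100^3 / ((real n - 1)^3 * real n)"
  proof -
    have rn: "real (n - 1) = real n - 1" using n2 by (simp add: of_nat_diff)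
    have nz: "real n - 1 \<noteq> 0" "real n \<noteq> 0" using n2 by auto
    show ?thesis unfolding e1 c_def rn using nz by (simp add: power3_eq_cube field_simps)
  qed
  also have "\<dots> \<le> 8 * 4100^3 / (real n)^4"
  proof -
    have n1: "real n / 2 \<le> real n - 1" using n2 by simp
    have "(real n / 2)^3 \<le> (real n - 1)^3" using n1 n2 by (intro power_mono) auto
    then have "(real n)^3 \<le> 8 * (real n - 1)^3" by (simp add: power_divide)
    then have "real n * (real n)^3 \<le> real n * (8 * (real n - 1)^3)" by (intro mult_left_mono) auto
    then have "(real n)^4 \<le> 8 * ((real n - 1)^3 * real n)" by (simp add: eval_nat_numeral algebra_simps)
    moreover have B0: "0 < (real n - 1)^3 * real n" using n2 by simp
    moreover have "0 < (real n)^4" using n2 by simp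
    ultimately have "(8 * 4100^3) / (8 * ((real n - 1)^3 * real n)) \<le> (8 * 4100^3) / (real n)^4"
      by (intro frac_le) auto
    moreover have "(8 * 4100^3) / (8 * ((real n - 1)^3 * real n)) = 4100^3 / ((real n - 1)^3 * real n)"
      by simp
    ultimately show ?thesis by (simp add: mult.commute)
  qed
  finally show ?thesis unfolding e_def .
qed

end


context haar
begin

lemma a1: "integral\<^sup>L \<mu> (\<lambda>U. (dd n 1 0 U)^4) \<le> (8 * 4100^3 + 1) / (real n)^4"
proof -
  have d: "dd n 1 0 U = ent 0 0 U - 1 / real n" for U by (simp add: dd_def)
  have "integral\<^sup>L \<mu> (\<lambda>U. (dd n 1 0 U)^4) \<le> integral\<^sup>L \<mu> (\<lambda>U. ent 0 0 U ^ 4 + (1 / real n)^4)"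
    unfolding d by (intro integral_mono bnd_int bnd_intros pow4_shift) auto
  also have "\<dots> = integral\<^sup>L \<mu> (\<lambda>U. ent 0 0 U ^ 4) + (1 / real n)^4"
    by (subst Bochner_Integration.integral_add) (auto intro!: bnd_int bnd_intros simp: prob_space)
  also have "\<dots> \<le> 8 * 4100^3 / (real n)^4 + (1 / real n)^4" using z4 by simp
  also have "\<dots> = (8 * 4100^3 + 1) / (real n)^4" by (simp add: power_divide add_divide_distrib)
  finally show ?thesis .
qed

lemma dd_adj: "q \<le> n \<Longrightarrow> dd n q 0 (mat_adj n U) = XX n q 1 U"
proof -
  assume q: "q \<le> n"
  have "(\<Sum>j<q. ent 0 j (mat_adj n U)) = (\<Sum>j<q. ent j 0 U)"
    using q n2 by (intro sum.cong) (auto simp: ent_def mat_adj_def)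
  then show ?thesis by (simp add: dd_def XX_def sum_subtractf)
qed

lemma aq: assumes q: "1 \<le> q" "q \<le> n"
  shows "integral\<^sup>L \<mu> (\<lambda>U. (dd n q 0 U)^4) \<le> 48 * (real q)^2 * ((8 * 4100^3 + 1) / (real n)^4)"
proof -
  have "integral\<^sup>L \<mu> (\<lambda>U. (dd n q 0 U)^4) = integral\<^sup>L \<mu> (\<lambda>U. (dd n q 0 (mat_adj n U))^4)"
    by (rule adj_int[symmetric]) (auto intro: bm bnd_intros)
  also have "\<dots> = integral\<^sup>L \<mu> (\<lambda>U. (XX n q 1 U)^4)" using q by (simp add: dd_adj)
  also have "\<dots> \<le> 48 * (real q)^2 * integral\<^sup>L \<mu> (\<lambda>U. (dd n 1 0 U)^4)"
    using pairbound[of q 1] q n2 by simp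
  also have "\<dots> \<le> 48 * (real q)^2 * ((8 * 4100^3 + 1) / (real n)^4)"
    by (intro mult_left_mono a1) auto
  finally show ?thesis .
qed

lemma main_bound: assumes p: "1 \<le> p" "p \<le> n" and q: "1 \<le> q" "q \<le> n"
  shows "integral\<^sup>L \<mu> (\<lambda>U. (XX n p q U)^4) \<le> 48 * 48 * (8 * 4100^3 + 1) * ((real p)^2 * (real q)^2) / (real n)^4"
proof -
  have "integral\<^sup>L \<mu> (\<lambda>U. (XX n p q U)^4) \<le> 48 * (real p)^2 * integral\<^sup>L \<mu> (\<lambda>U. (dd n q 0 U)^4)"
    by (rule pairbound[OF p q(2)])
  also have "\<dots> \<le> 48 * (real p)^2 * (48 * (real q)^2 * ((8 * 4100^3 + 1) / (real n)^4))"
    by (intro mult_left_mono aq q) auto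
  also have "\<dots> = 48 * 48 * (8 * 4100^3 + 1) * ((real p)^2 * (real q)^2) / (real n)^4"
    by (simp add: field_simps)
  finally show ?thesis .
qed

lemma kappa: assumes p: "1 \<le> p" "p \<le> n" and q: "1 \<le> q" "q \<le> n"
  shows "\<bar>cumulant4 \<mu> (T_block p q)\<bar> \<le> 3 * (48 * 48 * (8 * 4100^3 + 1)) * ((real p)^2 * (real q)^2) / (real n)^4"
proof -
  define c where "c = real p * real q / real n"
  define X where "X = XX n p q"
  have Tf: "T_block p q = (\<lambda>U. X U + c)"
  proof
    fix U
    have "X U = (\<Sum>i<p. \<Sum>j<q. (cmod (U i j))\<^sup>2) - real p * (real q / real n)"
      by (simp add: X_def XX_def dd_def ent_def sum_subtractf)
    then show "T_block p q U = X U + c" by (simp add: T_block_def c_def)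
  qed
  have EX: "integral\<^sup>L \<mu> X = 0"
  proof -
    have "integral\<^sup>L \<mu> X = (\<Sum>i<p. integral\<^sup>L \<mu> (dd n q i))"
      unfolding X_def XX_fun by (rule Bochner_Integration.integral_sum) (intro bnd_int bnd_intros)
    also have "\<dots> = (\<Sum>i<p. 0)"
    proof (rule sum.cong)
      fix i assume i: "i \<in> {..<p}"
      have "integral\<^sup>L \<mu> (dd n q i) = (\<Sum>j<q. integral\<^sup>L \<mu> (ent i j)) - real q / real n"
      proof -
        have s1: "integral\<^sup>L \<mu> (\<lambda>U. \<Sum>j<q. ent i j U) = (\<Sum>j<q. integral\<^sup>L \<mu> (ent i j))"
          by (rule Bochner_Integration.integral_sum) (intro bnd_int bnd_ent)
        show ?thesis unfolding dd_fun
          by (subst Bochner_Integration.integral_diff) (auto intro!: bnd_int bnd_intros bnd_sum simp: prob_space s1)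
      qed
      also have "(\<Sum>j<q. integral\<^sup>L \<mu> (ent i j)) = (\<Sum>j<q. 1 / real n)"
        using i p q by (intro sum.cong refl ey) auto
      finally show "integral\<^sup>L \<mu> (dd n q i) = 0" by simp
    qed simp
    finally show ?thesis by simp
  qed
  have m: "integral\<^sup>L \<mu> (T_block p q) = c"
    unfolding Tf by (subst Bochner_Integration.integral_add) (auto intro!: bnd_int bnd_intros simp: X_def EX[unfolded X_def] prob_space)
  define E4 where "E4 = integral\<^sup>L \<mu> (\<lambda>U. (X U)^4)"
  define v where "v = integral\<^sup>L \<mu> (\<lambda>U. (X U)^2)"
  have k: "cumulant4 \<mu> (T_block p q) = E4 - 3 * v^2"
    unfolding cumulant4_def Let_def m by (simp add: Tf E4_def v_def)
  have E0: "0 \<le> E4" unfolding E4_def by (intro integral_nonneg_AE) (auto simp: zero_le_even_power)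
  have bX: "bnd \<mu> X" unfolding X_def by (rule bnd_XX)
  have v2: "v^2 \<le> E4"
  proof -
    have "0 \<le> integral\<^sup>L \<mu> (\<lambda>U. ((X U)^2 - v)^2)" by (intro integral_nonneg_AE) auto
    also have "integral\<^sup>L \<mu> (\<lambda>U. ((X U)^2 - v)^2) = integral\<^sup>L \<mu> (\<lambda>U. (X U)^4 - 2 * v * (X U)^2 + v^2)"
      by (rule Bochner_Integration.integral_cong) (auto simp: power2_eq_square eval_nat_numeral algebra_simps)
    also have "\<dots> = E4 - 2 * v * v + v^2"
    proof -
      have "integral\<^sup>L \<mu> (\<lambda>U. (X U)^4 - 2 * v * (X U)^2 + v^2) = integral\<^sup>L \<mu> (\<lambda>U. (X U)^4 - 2 * v * (X U)^2) + v^2"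
        by (subst Bochner_Integration.integral_add) (auto intro!: bnd_int bnd_intros bX simp: prob_space)
      also have "integral\<^sup>L \<mu> (\<lambda>U. (X U)^4 - 2 * v * (X U)^2) = E4 - 2 * v * v"
        unfolding E4_def v_def
        by (subst Bochner_Integration.integral_diff) (auto intro!: bnd_int bnd_intros bX)
      finally show ?thesis .
    qed
    finally show ?thesis by (simp add: power2_eq_square)
  qed
  have v0: "0 \<le> v^2" by simp
  have "\<bar>E4 - 3 * v^2\<bar> \<le> 3 * E4" using E0 v2 v0 by linarith
  also have "\<dots> \<le> 3 * (48 * 48 * (8 * 4100^3 + 1) * ((real p)^2 * (real q)^2) / (real n)^4)"
    using main_bound[OF p q] unfolding E4_def X_def by simp
  finally show ?thesis using k by simp
qed

end

theorem mainTheorem4: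
  shows "\<exists>C::real. \<forall>n p q \<mu>.
           2 \<le> n \<longrightarrow> 1 \<le> p \<longrightarrow> p \<le> n \<longrightarrow> 1 \<le> q \<longrightarrow> q \<le> n \<longrightarrow>
           haar_unitary n \<mu> \<longrightarrow>
           \<bar>cumulant4 \<mu> (T_block p q)\<bar> \<le> C * (real p ^ 2 * real q ^ 2) / real n ^ 4"
proof (intro exI allI impI)
  fix n p q :: nat and \<mu> :: "cmatrix measure"
  assume n: "2 \<le> n" and p: "1 \<le> p" "p \<le> n" and q: "1 \<le> q" "q \<le> n" and h: "haar_unitary n \<mu>"
  interpret haar n \<mu> using h n by unfold_locales
  show "\<bar>cumulant4 \<mu> (T_block p q)\<bar> \<le> (3 * (48 * 48 * (8 * 4100^3 + 1))) * (real p ^ 2 * real q ^ 2) / real n ^ 4"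
    using kappa[OF p q] by simp
qed


end
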